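(* Let $\gamma > 1$ satisfy $\gamma(\gamma - 1)^2 > 1$, and let $I$ be a $\gamma$-stable instance of the metric Steiner tree problem with optimal Steiner tree $\mathrm{OPT}$. Let $H$ be a subgraph of $\mathrm{OPT}$ with at least two vertices, let $ab$ be an edge of $H$, and let $c \in V(\mathrm{OPT}) \setminus V(H)$. Then $w_{ca} < \frac{1}{\gamma - 1} w_{ab}$ if and only if $ca$ is an edge of $\mathrm{OPT}$.
   Context: An instance of the metric Steiner tree problem consists of a finite set $V$ of points of a metric space with metric $d$, a set $T \subseteq V$ of terminals, and the complete graph on $V$ with edge weights $w_{uv} = d(u,v)$. Points of $V \setminus T$ are Steiner points. A Steiner tree is a tree in this complete graph whose vertex set contains all of $T$; its weight is the sum of its edge weights. For $\gamma > 1$, the instance is $\gamma$-stable if it has a minimum-weight Steiner tree $\mathrm{OPT}$ such that for every $w' : V \times V \to \mathbb{R}_{\ge 0}$ with $w_{uv} \le w'_{uv} \le \gamma w_{uv}$ for all $u,v$, every minimum-weight Steiner tree with respect to $w'$ equals $\mathrm{OPT}$. $V(\mathrm{OPT})$ and $V(H)$ denote vertex sets. *)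

theory Defs
  imports Complex_Main
begin

definition metric_on :: "'a set \<Rightarrow> ('a \<Rightarrow> 'a \<Rightarrow> real) \<Rightarrow> bool" where
  "metric_on V d \<longleftrightarrow>
     (\<forall>u\<in>V. \<forall>v\<in>V. d u v \<ge> 0 \<and> (d u v = 0 \<longleftrightarrow> u = v) \<and> d u v = d v u) \<and>
     (\<forall>u\<in>V. \<forall>v\<in>V. \<forall>x\<in>V. d u v \<le> d u x + d x v)"

definition edges_on :: "'a set \<Rightarrow> 'a set set" where
  "edges_on W = {e. \<exists>u v. u \<in> W \<and> v \<in> W \<and> u \<noteq> v \<and> e = {u, v}}"

definition edge_w :: "('a \<Rightarrow> 'a \<Rightarrow> real) \<Rightarrow> 'a set \<Rightarrow> real" where
  "edge_w d e = (THE r. \<exists>u v. e = {u, v} \<and> u \<noteq> v \<and> r = d u v)"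

definition is_tree :: "'a set \<times> 'a set set \<Rightarrow> bool" where
  "is_tree G \<longleftrightarrow> (let W = fst G; E = snd G in
     finite W \<and> W \<noteq> {} \<and> E \<subseteq> edges_on W \<and>
     (\<forall>u\<in>W. \<forall>v\<in>W. (u, v) \<in> {(x, y). {x, y} \<in> E}\<^sup>*) \<and>
     card E = card W - 1)"

definition steiner_tree :: "'a set \<Rightarrow> 'a set \<Rightarrow> 'a set \<times> 'a set set \<Rightarrow> bool" where
  "steiner_tree V T G \<longleftrightarrow> is_tree G \<and> fst G \<subseteq> V \<and> T \<subseteq> fst G"

definition tree_weight :: "('a set \<Rightarrow> real) \<Rightarrow> 'a set \<times> 'a set set \<Rightarrow> real" where
  "tree_weight c G = (\<Sum>e\<in>snd G. c e)"

definition min_steiner_tree ::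
  "'a set \<Rightarrow> 'a set \<Rightarrow> ('a set \<Rightarrow> real) \<Rightarrow> 'a set \<times> 'a set set \<Rightarrow> bool" where
  "min_steiner_tree V T c G \<longleftrightarrow> steiner_tree V T G \<and>
     (\<forall>G'. steiner_tree V T G' \<longrightarrow> tree_weight c G \<le> tree_weight c G')"

definition gamma_perturbation ::
  "'a set \<Rightarrow> ('a \<Rightarrow> 'a \<Rightarrow> real) \<Rightarrow> real \<Rightarrow> ('a set \<Rightarrow> real) \<Rightarrow> bool" where
  "gamma_perturbation V d \<gamma> w' \<longleftrightarrow>
     (\<forall>e\<in>edges_on V. edge_w d e \<le> w' e \<and> w' e \<le> \<gamma> * edge_w d e)"

definition stable_with_opt ::
  "'a set \<Rightarrow> 'a set \<Rightarrow> ('a \<Rightarrow> 'a \<Rightarrow> real) \<Rightarrow> real \<Rightarrow> 'a set \<times> 'a set set \<Rightarrow> bool" where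
  "stable_with_opt V T d \<gamma> OPT \<longleftrightarrow>
     min_steiner_tree V T (edge_w d) OPT \<and>
     (\<forall>w'. gamma_perturbation V d \<gamma> w' \<longrightarrow>
        (\<forall>G. min_steiner_tree V T w' G \<longrightarrow> G = OPT))"

end

theory Submission
  imports Defs
begin

definition conn :: "'a set set \<Rightarrow> ('a \<times> 'a) set" where
  "conn E = {(x, y). {x, y} \<in> E}"

lemma conn_conv: "(conn E)\<inverse> = conn E"
  unfolding conn_def by (auto simp: insert_commute)

lemma conn_sym: "(x, y) \<in> (conn E)\<^sup>* \<Longrightarrow> (y, x) \<in> (conn E)\<^sup>*"
  by (metis conn_conv rtrancl_converseI)

lemma conn_mono: "E \<subseteq> F \<Longrightarrow> (conn E)\<^sup>* \<subseteq> (conn F)\<^sup>*"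
  by (rule rtrancl_mono) (auto simp: conn_def)

lemma edges_on_Pow: "edges_on W \<subseteq> Pow W"
  unfolding edges_on_def by auto

lemma conn_card:
  assumes "finite W" "E \<subseteq> edges_on W" "r \<in> W" "\<forall>w\<in>W. (w, r) \<in> (conn E)\<^sup>*"
  shows "card W - 1 \<le> card E"
proof -
  define R where "R = conn E"
  define dist where "dist w = (LEAST n. (w, r) \<in> R ^^ n)" for w
  have ex: "(w, r) \<in> R ^^ dist w" if "(w, r) \<in> R ^^ n" for w n
    unfolding dist_def using that by (rule LeastI)
  have le: "dist w \<le> n" if "(w, r) \<in> R ^^ n" for w n
    unfolding dist_def using that by (rule Least_le)
  have nb: "\<exists>y. {w, y} \<in> E \<and> Suc (dist y) = dist w" if "w \<in> W" "w \<noteq> r" for w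
  proof -
    from assms(4) that(1) have "(w, r) \<in> R\<^sup>*" unfolding R_def by blast
    then obtain n where "(w, r) \<in> R ^^ n" using rtrancl_power by blast
    hence h: "(w, r) \<in> R ^^ dist w" by (rule ex)
    have "dist w \<noteq> 0" using h that(2) by (cases "dist w") auto
    then obtain m where m: "dist w = Suc m" by (cases "dist w") auto
    with h obtain y where y1: "(w, y) \<in> R" and y2: "(y, r) \<in> R ^^ m"
      using relpow_Suc_D2 by metis
    have "dist y \<le> m" using le y2 by blast
    moreover have "(w, r) \<in> R ^^ Suc (dist y)"
      using relpow_Suc_I2[OF y1 ex[OF y2]] .
    hence "dist w \<le> Suc (dist y)" by (rule le)
    ultimately have "Suc (dist y) = dist w" using m by simp
    moreover have "{w, y} \<in> E" using y1 unfolding R_def conn_def by simp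
    ultimately show ?thesis by blast
  qed
  define f where "f w = (SOME e. \<exists>y. e = {w, y} \<and> e \<in> E \<and> Suc (dist y) = dist w)" for w
  have f: "\<exists>y. f w = {w, y} \<and> f w \<in> E \<and> Suc (dist y) = dist w" if "w \<in> W - {r}" for w
  proof -
    from nb that have "\<exists>e. \<exists>y. e = {w, y} \<and> e \<in> E \<and> Suc (dist y) = dist w" by blast
    then show ?thesis unfolding f_def by (rule someI_ex)
  qed
  have inj: "inj_on f (W - {r})"
  proof (rule inj_onI)
    fix w w' assume a: "w \<in> W - {r}" "w' \<in> W - {r}" "f w = f w'"
    show "w = w'"
    proof (rule ccontr)
      assume ne: "w \<noteq> w'"
      from f[OF a(1)] obtain y where y: "f w = {w, y}" "Suc (dist y) = dist w" by blast
      from f[OF a(2)] obtain y' where y': "f w' = {w', y'}" "Suc (dist y') = dist w'" by blast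
      from a(3) y(1) y'(1) ne have "w = y'" "w' = y" by (auto simp: doubleton_eq_iff)
      with y y' show False by simp
    qed
  qed
  have finE: "finite E"
    using assms(1,2) edges_on_Pow by (meson finite_Pow_iff finite_subset subset_trans)
  have "f ` (W - {r}) \<subseteq> E" using f by blast
  hence "card (W - {r}) \<le> card E" using card_inj_on_le[OF inj _ finE] by blast
  thus ?thesis using assms(1,3) by simp
qed

lemma reach_split:
  assumes "(w, u) \<in> (conn E)\<^sup>*"
  shows "(w, u) \<in> (conn (E - {{u, v}}))\<^sup>* \<or> (w, v) \<in> (conn (E - {{u, v}}))\<^sup>*"
  using assms
proof (induction rule: converse_rtrancl_induct)
  case base
  then show ?case by simp
next
  case (step y z)
  show ?case
  proof (cases "{y, z} = {u, v}")
    case True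
    then have "y = u \<or> y = v" by (auto simp: doubleton_eq_iff)
    then show ?thesis by auto
  next
    case False
    then have "(y, z) \<in> conn (E - {{u, v}})" using step(1) by (simp add: conn_def)
    then show ?thesis using step(3) by (meson converse_rtrancl_into_rtrancl)
  qed
qed

lemma is_tree_conn: "is_tree (W, E) \<longleftrightarrow> finite W \<and> W \<noteq> {} \<and> E \<subseteq> edges_on W \<and>
   (\<forall>u\<in>W. \<forall>v\<in>W. (u, v) \<in> (conn E)\<^sup>*) \<and> card E = card W - 1"
  by (simp add: is_tree_def conn_def)

lemma edge_in: "{u, v} \<in> edges_on W \<Longrightarrow> u \<in> W \<and> v \<in> W \<and> u \<noteq> v"
  unfolding edges_on_def by (auto simp: doubleton_eq_iff)

lemma tree_cut:
  assumes "is_tree (W, E)" "{u, v} \<in> E" "u \<noteq> v"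
  shows "(u, v) \<notin> (conn (E - {{u, v}}))\<^sup>*"
proof
  assume h: "(u, v) \<in> (conn (E - {{u, v}}))\<^sup>*"
  from assms(1) have t: "finite W" "E \<subseteq> edges_on W" "\<forall>u\<in>W. \<forall>v\<in>W. (u, v) \<in> (conn E)\<^sup>*"
    "card E = card W - 1" by (auto simp: is_tree_conn)
  note ei = edge_in[OF subsetD[OF t(2) assms(2)]]
  have uv: "u \<in> W" "v \<in> W" using ei by simp_all
  have all: "\<forall>w\<in>W. (w, u) \<in> (conn (E - {{u, v}}))\<^sup>*"
  proof
    fix w assume "w \<in> W"
    with t(3) uv have "(w, u) \<in> (conn E)\<^sup>*" by blast
    from reach_split[OF this, of v] show "(w, u) \<in> (conn (E - {{u, v}}))\<^sup>*"
    proof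
      assume "(w, v) \<in> (conn (E - {{u, v}}))\<^sup>*"
      from rtrancl_trans[OF this conn_sym[OF h]] show ?thesis .
    qed
  qed
  have "E - {{u, v}} \<subseteq> edges_on W" using t(2) by blast
  from conn_card[OF t(1) this uv(1) all] have "card W - 1 \<le> card (E - {{u, v}})" .
  moreover have "finite E"
    using t(1,2) edges_on_Pow by (meson finite_Pow_iff finite_subset subset_trans)
  hence "card (E - {{u, v}}) = card E - 1" using assms(2) by simp
  moreover have "card {u, v} \<le> card W" using uv t(1) by (intro card_mono) auto
  hence "card W \<ge> 2" using assms(3) by simp
  ultimately show False using t(4) by simp
qed

lemma tree_exchange:
  assumes "is_tree (W, E)" "{u, v} \<in> E" "u \<noteq> v" "p \<in> W" "q \<in> W" "p \<noteq> q"
    "(p, q) \<notin> (conn (E - {{u, v}}))\<^sup>*"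
  shows "is_tree (W, insert {p, q} (E - {{u, v}}))"
proof -
  define D where "D = E - {{u, v}}"
  define F where "F = insert {p, q} D"
  from assms(1) have t: "finite W" "W \<noteq> {}" "E \<subseteq> edges_on W" "\<forall>u\<in>W. \<forall>v\<in>W. (u, v) \<in> (conn E)\<^sup>*"
    "card E = card W - 1" by (auto simp: is_tree_conn)
  note ei = edge_in[OF subsetD[OF t(3) assms(2)]]
  have uvW: "u \<in> W" "v \<in> W" using ei by simp_all
  have ncD: "(p, q) \<notin> (conn D)\<^sup>*" using assms(7) by (simp add: D_def)
  have sub: "(conn D)\<^sup>* \<subseteq> (conn F)\<^sup>*" by (rule conn_mono) (auto simp: F_def)
  have subI: "(x, y) \<in> (conn F)\<^sup>*" if "(x, y) \<in> (conn D)\<^sup>*" for x y using sub that by blast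
  have pq: "(p, q) \<in> (conn F)\<^sup>*" by (rule r_into_rtrancl) (simp add: conn_def F_def)
  have rsplit: "(w, u) \<in> (conn D)\<^sup>* \<or> (w, v) \<in> (conn D)\<^sup>*" if "w \<in> W" for w
  proof -
    have "(w, u) \<in> (conn E)\<^sup>*" using t(4) that uvW by blast
    from reach_split[OF this, of v] show ?thesis by (simp add: D_def)
  qed
  have uv: "(u, v) \<in> (conn F)\<^sup>*"
  proof (cases "(p, u) \<in> (conn D)\<^sup>*")
    case pu: True
    have "(q, u) \<notin> (conn D)\<^sup>*"
    proof
      assume "(q, u) \<in> (conn D)\<^sup>*"
      from rtrancl_trans[OF pu conn_sym[OF this]] ncD show False by simp
    qed
    hence qv: "(q, v) \<in> (conn D)\<^sup>*" using rsplit[OF assms(5)] by simp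
    have "(u, p) \<in> (conn F)\<^sup>*" by (rule subI[OF conn_sym[OF pu]])
    from rtrancl_trans[OF rtrancl_trans[OF this pq] subI[OF qv]] show ?thesis .
  next
    case False
    hence pv: "(p, v) \<in> (conn D)\<^sup>*" using rsplit[OF assms(4)] by simp
    have "(q, v) \<notin> (conn D)\<^sup>*"
    proof
      assume "(q, v) \<in> (conn D)\<^sup>*"
      from rtrancl_trans[OF pv conn_sym[OF this]] ncD show False by simp
    qed
    hence qu: "(q, u) \<in> (conn D)\<^sup>*" using rsplit[OF assms(5)] by simp
    have "(v, p) \<in> (conn F)\<^sup>*" by (rule subI[OF conn_sym[OF pv]])
    from rtrancl_trans[OF rtrancl_trans[OF this pq] subI[OF qu]] show ?thesis by (rule conn_sym)
  qed
  have all: "(w, u) \<in> (conn F)\<^sup>*" if "w \<in> W" for w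
  proof (cases "(w, u) \<in> (conn D)\<^sup>*")
    case True then show ?thesis by (rule subI)
  next
    case False
    hence "(w, v) \<in> (conn D)\<^sup>*" using rsplit[OF that] by simp
    from rtrancl_trans[OF subI[OF this] conn_sym[OF uv]] show ?thesis .
  qed
  have connd: "\<forall>x\<in>W. \<forall>y\<in>W. (x, y) \<in> (conn F)\<^sup>*"
  proof (intro ballI)
    fix x y assume "x \<in> W" "y \<in> W"
    from rtrancl_trans[OF all[OF this(1)] conn_sym[OF all[OF this(2)]]] show "(x, y) \<in> (conn F)\<^sup>*" .
  qed
  have finE: "finite E"
    using t(1,3) edges_on_Pow by (meson finite_Pow_iff finite_subset subset_trans)
  have nin: "{p, q} \<notin> D"
  proof
    assume "{p, q} \<in> D"
    hence "(p, q) \<in> conn D" by (simp add: conn_def)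
    thus False using ncD by blast
  qed
  have finD: "finite D" using finE by (simp add: D_def)
  have "card F = Suc (card D)" using nin finD by (simp add: F_def)
  also have "card D = card E - 1" using assms(2) finE by (simp add: D_def)
  finally have "card F = Suc (card E - 1)" .
  moreover have "card E > 0" using assms(2) finE card_gt_0_iff by blast
  ultimately have cE: "card F = card W - 1" using t(5) by simp
  have "{p, q} \<in> edges_on W" using assms(4,5,6) unfolding edges_on_def by blast
  moreover have "D \<subseteq> edges_on W" using t(3) by (auto simp: D_def)
  ultimately have "F \<subseteq> edges_on W" by (simp add: F_def)
  with connd cE t(1,2) have "is_tree (W, F)" by (simp add: is_tree_conn)
  thus ?thesis by (simp add: F_def D_def)
qed

lemma edge_w_eq:
  assumes "metric_on V d" "x \<in> V" "y \<in> V" "x \<noteq> y"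
  shows "edge_w d {x, y} = d x y"
  unfolding edge_w_def
proof (rule the_equality)
  show "\<exists>u v. {x, y} = {u, v} \<and> u \<noteq> v \<and> d x y = d u v" using assms(4) by blast
next
  fix r assume "\<exists>u v. {x, y} = {u, v} \<and> u \<noteq> v \<and> r = d u v"
  then obtain u v where "{x, y} = {u, v}" "r = d u v" by blast
  then show "r = d x y" using assms unfolding metric_on_def by (auto simp: doubleton_eq_iff)
qed

lemma finite_min:
  fixes f :: "'b \<Rightarrow> real"
  assumes "finite S" "S \<noteq> {}"
  shows "\<exists>x\<in>S. \<forall>y\<in>S. f x \<le> f y"
proof -
  have "Min (f ` S) \<in> f ` S" using assms by simp
  then obtain x where "x \<in> S" "f x = Min (f ` S)" by force
  then show ?thesis using assms by (metis Min_le finite_imageI image_eqI)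
qed

lemma stab_exchange:
  assumes fin: "finite V" and met: "metric_on V d" and g: "\<gamma> > 1"
    and st: "stable_with_opt V T d \<gamma> (W, E)"
    and e: "{u, v} \<in> E" "u \<noteq> v" and pq: "p \<in> W" "q \<in> W" "p \<noteq> q" "{p, q} \<noteq> {u, v}"
    and nc: "(p, q) \<notin> (conn (E - {{u, v}}))\<^sup>*"
  shows "\<gamma> * edge_w d {u, v} < edge_w d {p, q}"
proof -
  let ?D = "E - {{u, v}}"
  let ?E = "insert {p, q} ?D"
  have sOPT: "steiner_tree V T (W, E)" using st by (simp add: stable_with_opt_def min_steiner_tree_def)
  hence tr: "is_tree (W, E)" "W \<subseteq> V" "T \<subseteq> W" by (auto simp: steiner_tree_def)
  have t2: "is_tree (W, ?E)" by (rule tree_exchange[OF tr(1) e pq(1,2,3) nc])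
  have sT: "steiner_tree V T (W, ?E)" using t2 tr by (simp add: steiner_tree_def)
  have "{u, v} \<notin> ?E" using pq(4) by auto
  hence neq: "(W, ?E) \<noteq> (W, E)" using e(1) by (metis prod.inject)
  have finE: "finite E" using tr(1)
    unfolding is_tree_conn using edges_on_Pow by (meson finite_Pow_iff finite_subset subset_trans)
  define w' where "w' e = (if e \<in> E then \<gamma> * edge_w d e else edge_w d e)" for e
  have nn: "edge_w d e \<ge> 0" if "e \<in> edges_on V" for e
  proof -
    from that obtain x y where "x \<in> V" "y \<in> V" "x \<noteq> y" "e = {x, y}" unfolding edges_on_def by blast
    then show ?thesis using edge_w_eq[OF met] met unfolding metric_on_def by auto
  qed
  have gp: "gamma_perturbation V d \<gamma> w'"
    unfolding gamma_perturbation_def w'_def using nn g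
    by (smt (verit) mult_le_cancel_right1)
  let ?S = "{G. steiner_tree V T G}"
  have "?S \<subseteq> Pow V \<times> Pow (Pow V)"
  proof
    fix G assume "G \<in> ?S"
    then have "is_tree G" "fst G \<subseteq> V" by (auto simp: steiner_tree_def)
    then have "snd G \<subseteq> edges_on (fst G)" by (auto simp: is_tree_def Let_def)
    then have "snd G \<subseteq> Pow V" using edges_on_Pow \<open>fst G \<subseteq> V\<close> by blast
    then show "G \<in> Pow V \<times> Pow (Pow V)" using \<open>fst G \<subseteq> V\<close> by (cases G) auto
  qed
  hence finS: "finite ?S" using fin by (meson finite_Pow_iff finite_SigmaI finite_subset)
  obtain G where G: "G \<in> ?S" "\<forall>G'\<in>?S. tree_weight w' G \<le> tree_weight w' G'"
    using finite_min[OF finS, of "tree_weight w'"] sOPT by blast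
  hence minG: "min_steiner_tree V T w' G" by (simp add: min_steiner_tree_def)
  have stab0: "\<forall>w'. gamma_perturbation V d \<gamma> w' \<longrightarrow> (\<forall>G. min_steiner_tree V T w' G \<longrightarrow> G = (W, E))"
    using st unfolding stable_with_opt_def by (rule conjunct2)
  have stab: "G = (W, E)" if "min_steiner_tree V T w' G" for G
    using stab0 gp that by blast
  have "G = (W, E)" by (rule stab[OF minG])
  with G have optmin: "\<forall>G'. steiner_tree V T G' \<longrightarrow> tree_weight w' (W, E) \<le> tree_weight w' G'" by auto
  have "\<not> min_steiner_tree V T w' (W, ?E)"
  proof
    assume "min_steiner_tree V T w' (W, ?E)"
    hence "(W, ?E) = (W, E)" by (rule stab)
    with neq show False by contradiction
  qed
  then obtain G' where "steiner_tree V T G'" "tree_weight w' G' < tree_weight w' (W, ?E)"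
    using sT by (auto simp: min_steiner_tree_def not_le)
  with optmin have lt: "tree_weight w' (W, E) < tree_weight w' (W, ?E)" by fastforce
  have nin: "{p, q} \<notin> ?D"
  proof
    assume "{p, q} \<in> ?D"
    hence "(p, q) \<in> conn ?D" by (simp add: conn_def)
    thus False using nc by blast
  qed
  have "tree_weight w' (W, E) = w' {u, v} + sum w' ?D"
    unfolding tree_weight_def using finE e(1) by (simp add: sum.remove)
  moreover have "tree_weight w' (W, ?E) = w' {p, q} + sum w' ?D"
    unfolding tree_weight_def using finE nin by simp
  moreover have "w' {u, v} = \<gamma> * edge_w d {u, v}" using e(1) by (simp add: w'_def)
  moreover have "w' {p, q} = edge_w d {p, q}" using nin pq(4) by (simp add: w'_def)
  ultimately show ?thesis using lt by simp
qed

theorem mainTheorem4: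
  fixes V T :: "'a set" and d :: "'a \<Rightarrow> 'a \<Rightarrow> real" and \<gamma> :: real
    and OPT H :: "'a set \<times> 'a set set" and a b c :: 'a
  assumes "finite V" and "T \<subseteq> V" and "metric_on V d"
    and "\<gamma> > 1" and "\<gamma> * (\<gamma> - 1)^2 > 1"
    and "stable_with_opt V T d \<gamma> OPT"
    and "fst H \<subseteq> fst OPT" and "snd H \<subseteq> snd OPT" and "snd H \<subseteq> edges_on (fst H)"
    and "card (fst H) \<ge> 2"
    and "{a, b} \<in> snd H"
    and "c \<in> fst OPT - fst H"
  shows "d c a < d a b / (\<gamma> - 1) \<longleftrightarrow> {c, a} \<in> snd OPT"
proof -
  obtain W E where OPT: "OPT = (W, E)" by (cases OPT)
  note st = assms(6)[unfolded OPT]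
  have sOPT: "steiner_tree V T (W, E)" using st by (simp add: stable_with_opt_def min_steiner_tree_def)
  hence tr: "is_tree (W, E)" "W \<subseteq> V" by (auto simp: steiner_tree_def)
  have tc: "finite W" "E \<subseteq> edges_on W" "\<forall>u\<in>W. \<forall>v\<in>W. (u, v) \<in> (conn E)\<^sup>*"
    using tr(1) by (auto simp: is_tree_conn)
  have "{a, b} \<in> edges_on (fst H)" using assms(9,11) by blast
  note abH = edge_in[OF this, THEN conjunct1] edge_in[OF this, THEN conjunct2, THEN conjunct1]
     edge_in[OF this, THEN conjunct2, THEN conjunct2]
  have aW: "a \<in> W" and bW: "b \<in> W" using abH assms(7) OPT by auto
  have cW: "c \<in> W" and ca: "c \<noteq> a" and cb: "c \<noteq> b" using assms(12) abH OPT by auto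
  have abE: "{a, b} \<in> E" using assms(8,11) OPT by auto
  have aV: "a \<in> V" and bV: "b \<in> V" and cV: "c \<in> V" using aW bW cW tr(2) by auto
  have met: "\<forall>u\<in>V. \<forall>v\<in>V. d u v \<ge> 0 \<and> (d u v = 0 \<longleftrightarrow> u = v) \<and> d u v = d v u"
    "\<forall>u\<in>V. \<forall>v\<in>V. \<forall>x\<in>V. d u v \<le> d u x + d x v" using assms(3) by (auto simp: metric_on_def)
  have dpos: "d u v > 0" if "u \<in> V" "v \<in> V" "u \<noteq> v" for u v
  proof -
    have "d u v \<ge> 0" "d u v \<noteq> 0" using met(1) that by auto
    thus ?thesis by linarith
  qed
  have dsym: "d u v = d v u" if "u \<in> V" "v \<in> V" for u v using met(1) that by auto
  have dtri: "d u v \<le> d u x + d x v" if "u \<in> V" "v \<in> V" "x \<in> V" for u v x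
    using met(2) that by auto
  have dab: "d a b > 0" using dpos aV bV abH(3) by blast
  have g1: "\<gamma> - 1 > 0" using assms(4) by simp
  have cutab: "(a, b) \<notin> (conn (E - {{a, b}}))\<^sup>*" by (rule tree_cut[OF tr(1) abE abH(3)])
  show ?thesis
  proof
    assume lt: "d c a < d a b / (\<gamma> - 1)"
    show "{c, a} \<in> snd OPT"
    proof (rule ccontr)
      assume nE: "{c, a} \<notin> snd OPT"
      hence nE': "{c, a} \<notin> E" using OPT by simp
      define D where "D = {e \<in> E. a \<notin> e}"
      define S where "S = {w. (c, w) \<in> (conn D)\<^sup>*}"
      have cS: "c \<in> S" by (simp add: S_def)
      have aS: "a \<notin> S"
      proof
        assume "a \<in> S"
        hence "(c, a) \<in> (conn D)\<^sup>*" by (simp add: S_def)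
        then show False using ca
          by (cases rule: rtranclE) (auto simp: conn_def D_def)
      qed
      have cross: "\<And>z. (c, z) \<in> (conn E)\<^sup>* \<Longrightarrow> z \<notin> S \<Longrightarrow> \<exists>s t. {s, t} \<in> E \<and> s \<in> S \<and> t \<notin> S"
      proof -
        fix z assume "(c, z) \<in> (conn E)\<^sup>*" "z \<notin> S"
        then show "\<exists>s t. {s, t} \<in> E \<and> s \<in> S \<and> t \<notin> S"
        proof (induction rule: rtrancl_induct)
          case base then show ?case using cS by simp
        next
          case (step y z)
          show ?case
          proof (cases "y \<in> S")
            case True then show ?thesis using step by (auto simp: conn_def)
          next
            case False then show ?thesis using step by blast
          qed
        qed
      qed
      obtain s t where st1: "{s, t} \<in> E" "s \<in> S" "t \<notin> S"
        using cross[of a] tc(3) cW aW aS by blast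
      have "a \<in> {s, t}"
      proof (rule ccontr)
        assume "a \<notin> {s, t}"
        hence "(s, t) \<in> conn D" using st1(1) by (simp add: conn_def D_def)
        hence "t \<in> S" using st1(2) unfolding S_def by (meson mem_Collect_eq rtrancl.rtrancl_into_rtrancl)
        thus False using st1(3) by simp
      qed
      hence ta: "t = a" using st1(2) aS by auto
      define x where "x = s"
      have xaE: "{x, a} \<in> E" using st1(1) ta x_def by simp
      have xa: "x \<noteq> a" using st1(2) aS x_def by auto
      have "{x, a} \<in> edges_on W" using xaE tc(2) by blast
      note xW = edge_in[OF this, THEN conjunct1]
      have xV: "x \<in> V" using xW tr(2) by auto
      have "D \<subseteq> E - {{x, a}}" by (auto simp: D_def)
      moreover have "(c, x) \<in> (conn D)\<^sup>*" using st1(2) by (simp add: S_def x_def)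
      ultimately have cx: "(c, x) \<in> (conn (E - {{x, a}}))\<^sup>*" using conn_mono by blast
      have cutxa: "(x, a) \<notin> (conn (E - {{x, a}}))\<^sup>*" by (rule tree_cut[OF tr(1) xaE xa])
      have nca: "(c, a) \<notin> (conn (E - {{x, a}}))\<^sup>*"
        using cx cutxa conn_sym by (meson rtrancl_trans)
      have cx': "c \<noteq> x" using xaE nE' by auto
      have "{c, a} \<noteq> {x, a}" using cx' ca by (auto simp: doubleton_eq_iff)
      from stab_exchange[OF assms(1,3,4) st xaE xa cW aW ca this nca]
      have k1: "\<gamma> * d x a < d c a"
        using edge_w_eq[OF assms(3)] xV aV cV xa ca by simp
      have dxa: "d x a > 0" using dpos xV aV xa by blast
      have lt2: "d c a * (\<gamma> - 1) < d a b" using lt g1 by (simp add: pos_less_divide_eq)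
      show False
      proof (cases "x = b")
        case True
        hence "\<gamma> * d a b < d c a" using k1 dsym[OF aV bV] by simp
        hence "\<gamma> * d a b * (\<gamma> - 1) < d c a * (\<gamma> - 1)" using mult_strict_right_mono g1 by blast
        hence "\<gamma> * (\<gamma> - 1) * d a b < 1 * d a b" using lt2 by (simp add: algebra_simps)
        hence h: "\<gamma> * (\<gamma> - 1) < 1" using dab mult_less_cancel_right_pos by blast
        have h2: "\<gamma> * (\<gamma> - 1) * (\<gamma> - 1) < 1 * (\<gamma> - 1)"
          using mult_strict_right_mono[OF h g1] .
        have "1 * (\<gamma> - 1) < \<gamma> * (\<gamma> - 1)"
          using mult_strict_right_mono[OF assms(4) g1] .
        hence "\<gamma> * (\<gamma> - 1) * (\<gamma> - 1) < 1" using h h2 by linarith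
        thus False using assms(5) by (simp add: power2_eq_square mult.assoc)
      next
        case False
        have xaE2: "{x, a} \<in> E - {{a, b}}" using xaE False by (auto simp: doubleton_eq_iff)
        hence "(x, a) \<in> (conn (E - {{a, b}}))\<^sup>*" by (auto simp: conn_def)
        hence nxb: "(x, b) \<notin> (conn (E - {{a, b}}))\<^sup>*" using cutab conn_sym by (meson rtrancl_trans)
        have "{x, b} \<noteq> {a, b}" using xa False by (auto simp: doubleton_eq_iff)
        from stab_exchange[OF assms(1,3,4) st abE abH(3) xW bW False this nxb]
        have "\<gamma> * d a b < d x b" using edge_w_eq[OF assms(3)] xV aV bV abH(3) False by simp
        moreover have "d x b \<le> d x a + d a b" using dtri xV aV bV by blast
        ultimately have k2: "(\<gamma> - 1) * d a b < d x a" by (simp add: algebra_simps)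
        have "\<gamma> * ((\<gamma> - 1) * d a b) < \<gamma> * d x a" using k2 assms(4) by simp
        hence "\<gamma> * (\<gamma> - 1) * d a b < d c a" using k1 by simp
        hence "\<gamma> * (\<gamma> - 1) * d a b * (\<gamma> - 1) < d c a * (\<gamma> - 1)"
          using mult_strict_right_mono g1 by blast
        moreover have "\<gamma> * (\<gamma> - 1) * d a b * (\<gamma> - 1) = (\<gamma> * (\<gamma> - 1)^2) * d a b"
          by (simp add: power2_eq_square mult_ac)
        ultimately have "(\<gamma> * (\<gamma> - 1)^2) * d a b < 1 * d a b" using lt2 by linarith
        hence "\<gamma> * (\<gamma> - 1)^2 < 1" using dab mult_less_cancel_right_pos by blast
        thus False using assms(5) by simp
      qed
    qed
  next
    assume "{c, a} \<in> snd OPT"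
    hence caE: "{c, a} \<in> E" using OPT by simp
    have cutca: "(c, a) \<notin> (conn (E - {{c, a}}))\<^sup>*" by (rule tree_cut[OF tr(1) caE ca])
    have "{a, b} \<in> E - {{c, a}}" using abE ca cb by (auto simp: doubleton_eq_iff)
    hence "(a, b) \<in> conn (E - {{c, a}})" unfolding conn_def by blast
    hence "(b, a) \<in> (conn (E - {{c, a}}))\<^sup>*" by (rule conn_sym[OF r_into_rtrancl])
    hence ncb: "(c, b) \<notin> (conn (E - {{c, a}}))\<^sup>*" using cutca by (meson rtrancl_trans)
    have "{c, b} \<noteq> {c, a}" using abH(3) cb by (auto simp: doubleton_eq_iff)
    from stab_exchange[OF assms(1,3,4) st caE ca cW bW cb this ncb]
    have "\<gamma> * d c a < d c b" using edge_w_eq[OF assms(3)] cV aV bV ca cb by simp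
    moreover have "d c b \<le> d c a + d a b" using dtri cV aV bV by blast
    ultimately have "d c a * (\<gamma> - 1) < d a b" by (simp add: algebra_simps)
    thus "d c a < d a b / (\<gamma> - 1)" using g1 by (simp add: pos_less_divide_eq)
  qed
qed

end
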